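(* For any simple connected graph $G$ with at least one edge, $src(G)\geq \chi'(G)\geq \omega'(G)$. Moreover, if an edge coloring $f$ of $G$ strongly rainbow connects $G$, then $f$ is a proper coloring of the vertices of the auxiliary graph $H(G)$.
   Context: An edge coloring of $G$ is any function $f:E(G)\to\{1,\dots,k\}$, $k\in\mathbb{N}$ (adjacent edges may share a color). A path is rainbow with respect to $f$ if its edges receive pairwise distinct colors. $f$ strongly rainbow connects $G$ if for every pair of distinct vertices $u,v$ there is a shortest $(u,v)$-path that is rainbow; $src(G)$ is the minimum $k$ for which such an $f:E(G)\to\{1,\dots,k\}$ exists. For distinct $u_1,u_2\in V(G)$, an edge $e$ separates $u_1,u_2$ if $e$ lies on every shortest $(u_1,u_2)$-path in $G$. The auxiliary graph $H(G)$ has vertex set $E(G)$, and two distinct edges $e_1,e_2\in E(G)$ are adjacent in $H(G)$ iff there exists a pair of distinct vertices $v_1,v_2\in V(G)$ separated by both $e_1$ and $e_2$. Define $\omega'(G)=\omega(H(G))$ (clique number) and $\chi'(G)=\chi(H(G))$ (chromatic number). Since $V(H(G))=E(G)$, an edge coloring of $G$ is a coloring of the vertices of $H(G)$. *)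

theory Defs
  imports Main
begin

definition simple_graph :: "'a set \<Rightarrow> 'a set set \<Rightarrow> bool" where
  "simple_graph V E \<longleftrightarrow> finite V \<and>
     (\<forall>e\<in>E. \<exists>u v. u \<in> V \<and> v \<in> V \<and> u \<noteq> v \<and> e = {u, v})"

definition is_walk :: "'a set \<Rightarrow> 'a set set \<Rightarrow> 'a list \<Rightarrow> bool" where
  "is_walk V E xs \<longleftrightarrow> xs \<noteq> [] \<and> set xs \<subseteq> V \<and>
     (\<forall>i. Suc i < length xs \<longrightarrow> {xs ! i, xs ! Suc i} \<in> E)"

definition connected_graph :: "'a set \<Rightarrow> 'a set set \<Rightarrow> bool" where
  "connected_graph V E \<longleftrightarrow>
     (\<forall>u\<in>V. \<forall>v\<in>V. \<exists>xs. is_walk V E xs \<and> hd xs = u \<and> last xs = v)"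

definition is_path :: "'a set \<Rightarrow> 'a set set \<Rightarrow> 'a list \<Rightarrow> 'a \<Rightarrow> 'a \<Rightarrow> bool" where
  "is_path V E xs u v \<longleftrightarrow> is_walk V E xs \<and> distinct xs \<and> hd xs = u \<and> last xs = v"

definition shortest_path :: "'a set \<Rightarrow> 'a set set \<Rightarrow> 'a list \<Rightarrow> 'a \<Rightarrow> 'a \<Rightarrow> bool" where
  "shortest_path V E xs u v \<longleftrightarrow> is_path V E xs u v \<and>
     (\<forall>ys. is_path V E ys u v \<longrightarrow> length xs \<le> length ys)"

definition path_edges :: "'a list \<Rightarrow> 'a set list" where
  "path_edges xs = map (\<lambda>i. {xs ! i, xs ! Suc i}) [0..<length xs - 1]"

definition rainbow :: "('a set \<Rightarrow> nat) \<Rightarrow> 'a list \<Rightarrow> bool" where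
  "rainbow f xs \<longleftrightarrow> distinct (map f (path_edges xs))"

definition strongly_rainbow_connects :: "'a set \<Rightarrow> 'a set set \<Rightarrow> ('a set \<Rightarrow> nat) \<Rightarrow> bool" where
  "strongly_rainbow_connects V E f \<longleftrightarrow>
     (\<forall>u\<in>V. \<forall>v\<in>V. u \<noteq> v \<longrightarrow> (\<exists>xs. shortest_path V E xs u v \<and> rainbow f xs))"

definition src :: "'a set \<Rightarrow> 'a set set \<Rightarrow> nat" where
  "src V E = (LEAST k. \<exists>f. f ` E \<subseteq> {1..k} \<and> strongly_rainbow_connects V E f)"

definition separates :: "'a set \<Rightarrow> 'a set set \<Rightarrow> 'a set \<Rightarrow> 'a \<Rightarrow> 'a \<Rightarrow> bool" where
  "separates V E e u1 u2 \<longleftrightarrow> u1 \<noteq> u2 \<and>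
     (\<forall>xs. shortest_path V E xs u1 u2 \<longrightarrow> e \<in> set (path_edges xs))"

definition H_adj :: "'a set \<Rightarrow> 'a set set \<Rightarrow> 'a set \<Rightarrow> 'a set \<Rightarrow> bool" where
  "H_adj V E e1 e2 \<longleftrightarrow> e1 \<in> E \<and> e2 \<in> E \<and> e1 \<noteq> e2 \<and>
     (\<exists>v1\<in>V. \<exists>v2\<in>V. v1 \<noteq> v2 \<and> separates V E e1 v1 v2 \<and> separates V E e2 v1 v2)"

definition is_clique :: "'b set \<Rightarrow> ('b \<Rightarrow> 'b \<Rightarrow> bool) \<Rightarrow> 'b set \<Rightarrow> bool" where
  "is_clique W R C \<longleftrightarrow> C \<subseteq> W \<and> (\<forall>x\<in>C. \<forall>y\<in>C. x \<noteq> y \<longrightarrow> R x y)"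

definition clique_number :: "'b set \<Rightarrow> ('b \<Rightarrow> 'b \<Rightarrow> bool) \<Rightarrow> nat" where
  "clique_number W R = Max {card C | C. is_clique W R C}"

definition proper_coloring :: "'b set \<Rightarrow> ('b \<Rightarrow> 'b \<Rightarrow> bool) \<Rightarrow> ('b \<Rightarrow> nat) \<Rightarrow> bool" where
  "proper_coloring W R c \<longleftrightarrow> (\<forall>x\<in>W. \<forall>y\<in>W. R x y \<longrightarrow> c x \<noteq> c y)"

definition chromatic_number :: "'b set \<Rightarrow> ('b \<Rightarrow> 'b \<Rightarrow> bool) \<Rightarrow> nat" where
  "chromatic_number W R = (LEAST k. \<exists>c. c ` W \<subseteq> {1..k} \<and> proper_coloring W R c)"

definition omega' :: "'a set \<Rightarrow> 'a set set \<Rightarrow> nat" where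
  "omega' V E = clique_number E (H_adj V E)"

definition chi' :: "'a set \<Rightarrow> 'a set set \<Rightarrow> nat" where
  "chi' V E = chromatic_number E (H_adj V E)"

end

theory Submission
  imports Defs
begin

lemma walk_single: "is_walk V E [x] \<longleftrightarrow> x \<in> V"
  by (simp add: is_walk_def)

lemma walk_cons2: "is_walk V E (x#y#xs) \<longleftrightarrow> x \<in> V \<and> {x,y} \<in> E \<and> is_walk V E (y#xs)"
proof
  assume a: "is_walk V E (x#y#xs)"
  have h: "\<forall>i. Suc i < length (x#y#xs) \<longrightarrow> {(x#y#xs)!i, (x#y#xs)!Suc i} \<in> E"
    using a unfolding is_walk_def by blast
  have s: "set (x#y#xs) \<subseteq> V" using a unfolding is_walk_def by blast
  have "{x,y} \<in> E" using spec[OF h, of 0] by simp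
  moreover have "\<forall>i. Suc i < length (y#xs) \<longrightarrow> {(y#xs) ! i, (y#xs) ! Suc i} \<in> E"
  proof (intro allI impI)
    fix i assume "Suc i < length (y#xs)"
    then show "{(y#xs) ! i, (y#xs) ! Suc i} \<in> E" using spec[OF h, of "Suc i"] by simp
  qed
  moreover have "set (y#xs) \<subseteq> V" "x \<in> V" using s by auto
  ultimately show "x \<in> V \<and> {x,y} \<in> E \<and> is_walk V E (y#xs)" unfolding is_walk_def by blast
next
  assume a: "x \<in> V \<and> {x,y} \<in> E \<and> is_walk V E (y#xs)"
  have h: "\<forall>i. Suc i < length (y#xs) \<longrightarrow> {(y#xs)!i, (y#xs)!Suc i} \<in> E"
    using a unfolding is_walk_def by blast
  have s: "set (y#xs) \<subseteq> V" using a unfolding is_walk_def by blast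
  have "\<forall>i. Suc i < length (x#y#xs) \<longrightarrow> {(x#y#xs) ! i, (x#y#xs) ! Suc i} \<in> E"
  proof (intro allI impI)
    fix i assume i: "Suc i < length (x#y#xs)"
    show "{(x#y#xs) ! i, (x#y#xs) ! Suc i} \<in> E"
    proof (cases i)
      case 0 then show ?thesis using a by simp
    next
      case (Suc j) then show ?thesis using i spec[OF h, of j] by simp
    qed
  qed
  moreover have "set (x#y#xs) \<subseteq> V" using s a by auto
  ultimately show "is_walk V E (x#y#xs)" unfolding is_walk_def by blast
qed

lemma walk_drop: "is_walk V E xs \<Longrightarrow> n < length xs \<Longrightarrow> is_walk V E (drop n xs)"
  unfolding is_walk_def
  by (auto dest: in_set_dropD)

lemma walk_to_path: "is_walk V E xs \<Longrightarrow> \<exists>ys. is_walk V E ys \<and> distinct ys \<and> hd ys = hd xs \<and> last ys = last xs"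
proof (induction xs rule: induct_list012)
  case 1 then show ?case by (simp add: is_walk_def)
next
  case (2 x) then show ?case by auto
next
  case (3 x y zs)
  then have w: "is_walk V E (y#zs)" and xe: "x \<in> V" "{x,y} \<in> E" using walk_cons2 by metis+
  from "3.IH"(2)[OF w] obtain ys where ys: "is_walk V E ys" "distinct ys" "hd ys = y" "last ys = last (y#zs)" by auto
  show ?case
  proof (cases "x \<in> set ys")
    case True
    then obtain a b where ab: "ys = a @ x # b" by (metis split_list)
    have "is_walk V E (x#b)" using walk_drop[OF ys(1), of "length a"] ab by simp
    moreover have "distinct (x#b)" using ys(2) ab by simp
    moreover have "last (x#b) = last (x#y#zs)" using ys(4) ab by simp
    ultimately show ?thesis by (metis list.sel(1))
  next
    case False
    have ne: "ys \<noteq> []" using ys(1) by (simp add: is_walk_def)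
    then have yy: "ys = y # tl ys" using ys(3) by (metis list.collapse)
    have "is_walk V E (x#ys)" using walk_cons2[of V E x y "tl ys"] yy xe ys(1) by metis
    moreover have "distinct (x#ys)" using False ys(2) by simp
    moreover have "last (x#ys) = last (x#y#zs)" using ys(4) ne by simp
    ultimately show ?thesis by (metis list.sel(1))
  qed
qed

lemma shortest_exists:
  assumes "connected_graph V E" "u \<in> V" "v \<in> V"
  shows "\<exists>xs. shortest_path V E xs u v"
proof -
  obtain xs where "is_walk V E xs" "hd xs = u" "last xs = v" using assms unfolding connected_graph_def by blast
  then obtain ys where "is_path V E ys u v" using walk_to_path unfolding is_path_def by metis
  then obtain zs where "is_path V E zs u v" "\<forall>y. is_path V E y u v \<longrightarrow> length zs \<le> length y"
    using ex_has_least_nat[of "\<lambda>ys. is_path V E ys u v" ys length] by blast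
  then show ?thesis unfolding shortest_path_def by blast
qed

lemma distinct_path_edges: "distinct xs \<Longrightarrow> distinct (path_edges xs)"
  unfolding path_edges_def
proof (subst distinct_map, intro conjI)
  assume d: "distinct xs"
  show "inj_on (\<lambda>i. {xs ! i, xs ! Suc i}) (set [0..<length xs - 1])"
  proof (rule inj_onI)
    fix i j assume i: "i \<in> set [0..<length xs - 1]" and j: "j \<in> set [0..<length xs - 1]"
      and eq: "{xs ! i, xs ! Suc i} = {xs ! j, xs ! Suc j}"
    have il: "i < length xs" "Suc i < length xs" "j < length xs" "Suc j < length xs" using i j by auto
    have n: "\<And>a b. a < length xs \<Longrightarrow> b < length xs \<Longrightarrow> xs ! a = xs ! b \<longleftrightarrow> a = b"
      using d by (simp add: nth_eq_iff_index_eq)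
    from eq have "xs ! i = xs ! j \<or> xs ! i = xs ! Suc j" by blast
    then have "i = j \<or> i = Suc j" using n il by blast
    moreover from eq have "xs ! j = xs ! i \<or> xs ! j = xs ! Suc i" by blast
    then have "j = i \<or> j = Suc i" using n il by blast
    ultimately show "i = j" by auto
  qed
qed simp

lemma path_edges_in: "is_walk V E xs \<Longrightarrow> set (path_edges xs) \<subseteq> E"
  unfolding path_edges_def is_walk_def by auto

lemma part3:
  assumes "strongly_rainbow_connects V E f"
  shows "proper_coloring E (H_adj V E) f"
  unfolding proper_coloring_def
proof (intro ballI impI)
  fix x y assume "x \<in> E" "y \<in> E" "H_adj V E x y"
  then obtain v1 v2 where v: "v1 \<in> V" "v2 \<in> V" "v1 \<noteq> v2" "separates V E x v1 v2" "separates V E y v1 v2" "x \<noteq> y"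
    unfolding H_adj_def by blast
  obtain xs where xs: "shortest_path V E xs v1 v2" "rainbow f xs"
    using assms v unfolding strongly_rainbow_connects_def by blast
  have "x \<in> set (path_edges xs)" "y \<in> set (path_edges xs)" using v(4,5) xs(1) unfolding separates_def by auto
  moreover have "inj_on f (set (path_edges xs))" using xs(2) unfolding rainbow_def by (simp add: distinct_map)
  ultimately show "f x \<noteq> f y" using v(6) by (meson inj_onD)
qed

theorem theorem1:
  fixes V :: "'a set" and E :: "'a set set"
  assumes "simple_graph V E" and "connected_graph V E" and "E \<noteq> {}"
  shows "src V E \<ge> chi' V E \<and> chi' V E \<ge> omega' V E \<and>
    (\<forall>(k::nat) f. f ` E \<subseteq> {1..k} \<and> strongly_rainbow_connects V E f
        \<longrightarrow> proper_coloring E (H_adj V E) f)"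
proof -
  have finE: "finite E"
  proof -
    have EP: "E \<subseteq> Pow V"
    proof
      fix e assume "e \<in> E"
      then obtain u v where "u \<in> V" "v \<in> V" "e = {u, v}" using assms(1) unfolding simple_graph_def by meson
      then show "e \<in> Pow V" by simp
    qed
    have fV: "finite V" using assms(1) unfolding simple_graph_def by (rule conjunct1)
    show ?thesis by (rule finite_subset[OF EP]) (simp add: fV)
  qed
  obtain g where g: "bij_betw g E {0..<card E}" using ex_bij_betw_finite_nat[OF finE] by blast
  define c where "c = (\<lambda>e. g e + 1)"
  have ig: "inj_on g E" using g by (rule bij_betw_imp_inj_on)
  have injc: "inj_on c E" using ig unfolding inj_on_def c_def by simp
  have gE: "g ` E = {0..<card E}" using g by (rule bij_betw_imp_surj_on)
  have cE: "c ` E \<subseteq> {1..card E}"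
  proof
    fix z assume "z \<in> c ` E"
    then obtain e where e: "e \<in> E" "z = g e + 1" unfolding c_def by blast
    then have "g e < card E" using gE by auto
    then show "z \<in> {1..card E}" using e by simp
  qed
  have P3: "\<forall>(k::nat) f. f ` E \<subseteq> {1..k} \<and> strongly_rainbow_connects V E f
        \<longrightarrow> proper_coloring E (H_adj V E) f" using part3 by blast
  have srcc: "strongly_rainbow_connects V E c"
    unfolding strongly_rainbow_connects_def
  proof (intro ballI impI)
    fix u v assume "u \<in> V" "v \<in> V" "u \<noteq> v"
    then obtain xs where xs: "shortest_path V E xs u v" using shortest_exists assms(2) by metis
    then have "is_walk V E xs" "distinct xs" unfolding shortest_path_def is_path_def by auto
    then have "distinct (path_edges xs)" "set (path_edges xs) \<subseteq> E"
      using distinct_path_edges path_edges_in by blast+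
    then have "rainbow c xs" unfolding rainbow_def using injc
      by (simp add: distinct_map inj_on_subset)
    then show "\<exists>xs. shortest_path V E xs u v \<and> rainbow c xs" using xs by blast
  qed
  have "\<exists>f. f ` E \<subseteq> {1..src V E} \<and> strongly_rainbow_connects V E f"
    unfolding src_def by (rule LeastI_ex) (use cE srcc in blast)
  then obtain f0 where f0: "f0 ` E \<subseteq> {1..src V E}" "proper_coloring E (H_adj V E) f0"
    using P3 by blast
  have A: "chi' V E \<le> src V E" unfolding chi'_def chromatic_number_def
    by (rule Least_le) (use f0 in blast)
  have pc: "proper_coloring E (H_adj V E) c" unfolding proper_coloring_def
  proof (intro ballI impI)
    fix x y assume xy: "x \<in> E" "y \<in> E" "H_adj V E x y"
    then have "x \<noteq> y" by (simp add: H_adj_def)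
    then show "c x \<noteq> c y" using injc xy(1,2) by (meson inj_onD)
  qed
  have "\<exists>c0. c0 ` E \<subseteq> {1..chi' V E} \<and> proper_coloring E (H_adj V E) c0"
    unfolding chi'_def chromatic_number_def by (rule LeastI_ex) (use cE pc in blast)
  then obtain c0 where c0: "c0 ` E \<subseteq> {1..chi' V E}" "proper_coloring E (H_adj V E) c0" by blast
  have cl: "card C \<le> chi' V E" if "is_clique E (H_adj V E) C" for C
  proof -
    have CE: "C \<subseteq> E" using that unfolding is_clique_def by blast
    have "inj_on c0 C"
    proof (rule inj_onI)
      fix x y assume xy: "x \<in> C" "y \<in> C" "c0 x = c0 y"
      show "x = y"
      proof (rule ccontr)
        assume "x \<noteq> y"
        then have "H_adj V E x y" using that xy(1,2) unfolding is_clique_def by blast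
        then have "c0 x \<noteq> c0 y" using c0(2) CE xy(1,2) unfolding proper_coloring_def by blast
        then show False using xy(3) by simp
      qed
    qed
    then have "card C = card (c0 ` C)" by (simp add: card_image)
    also have "\<dots> \<le> card {1..chi' V E}" using c0(1) CE by (intro card_mono) auto
    finally show ?thesis by simp
  qed
  let ?S = "{card C | C. is_clique E (H_adj V E) C}"
  have "?S \<subseteq> {..card E}"
  proof
    fix n assume "n \<in> ?S"
    then obtain C where C: "n = card C" "is_clique E (H_adj V E) C" by blast
    then have "C \<subseteq> E" unfolding is_clique_def by blast
    then show "n \<in> {..card E}" using C(1) finE card_mono by auto
  qed
  then have finS: "finite ?S" using finite_subset by blast
  have "is_clique E (H_adj V E) {}" unfolding is_clique_def by simp
  then have "card ({}::'a set set) \<in> ?S" by blast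
  then have neS: "?S \<noteq> {}" by blast
  have "\<forall>n\<in>?S. n \<le> chi' V E" using cl by blast
  then have B: "omega' V E \<le> chi' V E" unfolding omega'_def clique_number_def
    using Max_le_iff[OF finS neS] by blast
  show ?thesis using A B P3 by blast
qed

end
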